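(* Let $\phi:\mathbb{M}_n\to\mathbb{M}_m$ be a positive linear map, and let $\phi^*:\mathbb{M}_m\to\mathbb{M}_n$ denote its adjoint with respect to the Hilbert–Schmidt inner product $\langle A,B\rangle=\mathrm{Tr}[A^*B]$. Then $\phi$ is a generalized Schwarz map if and only if for every pair $(K,X)\in \mathbb{M}_m\times\mathbb{M}_m^+$ with $\ker(X)\subseteq\ker(K^* )$ we have \[ \mathrm{Tr}[\phi^*(K^*X^{+}K)] \geq \mathrm{Tr}[\phi^*(K)^*\phi^*(X)^{+}\phi^*(K)]. \]
   Context: $\mathbb{M}_n$ denotes the $n\times n$ complex matrices and $\mathbb{M}_n^+$ the positive semidefinite ones; $\mathbf{1}_n$ is the identity. For a matrix $Z$, $Z^+$ denotes its Moore–Penrose generalized inverse. A linear map $\phi:\mathbb{M}_n\to\mathbb{M}_m$ is called positive if it maps $\mathbb{M}_n^+$ into $\mathbb{M}_m^+$. A linear map $\phi:\mathbb{M}_n\to\mathbb{M}_m$ is called a generalized Schwarz map if for all $K\in\mathbb{M}_n$ the block matrix $\begin{pmatrix}\phi(\mathbf{1}_n) & \phi(K)\\ \phi(K)^* & \phi(K^*K)\end{pmatrix}$ is positive semidefinite. *)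

theory Defs
  imports "HOL-Analysis.Analysis" "HOL-Library.Complex_Order"
begin

definition cadj :: "complex^'c^'r \<Rightarrow> complex^'r^'c" where
  "cadj A = (\<chi> i j. cnj (A $ j $ i))"

definition cscale :: "complex \<Rightarrow> complex^'c^'r \<Rightarrow> complex^'c^'r" where
  "cscale c A = (\<chi> i j. c * A $ i $ j)"

definition psd :: "complex^'n^'n \<Rightarrow> bool" where
  "psd A \<longleftrightarrow> cadj A = A \<and> (\<forall>x::complex^'n. 0 \<le> (\<Sum>i\<in>UNIV. cnj (x $ i) * (A *v x) $ i))"

definition ker :: "complex^'c^'r \<Rightarrow> (complex^'c) set" where
  "ker A = {x. A *v x = 0}"

definition mp_inv :: "complex^'c^'r \<Rightarrow> complex^'r^'c" where
  "mp_inv A = (THE B. A ** B ** A = A \<and> B ** A ** B = B \<and>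
                      cadj (A ** B) = A ** B \<and> cadj (B ** A) = B ** A)"

definition clinear_map :: "(complex^'n^'n \<Rightarrow> complex^'m^'m) \<Rightarrow> bool" where
  "clinear_map \<phi> \<longleftrightarrow> (\<forall>A B. \<phi> (A + B) = \<phi> A + \<phi> B) \<and> (\<forall>c A. \<phi> (cscale c A) = cscale c (\<phi> A))"

definition positive_map :: "(complex^'n^'n \<Rightarrow> complex^'m^'m) \<Rightarrow> bool" where
  "positive_map \<phi> \<longleftrightarrow> clinear_map \<phi> \<and> (\<forall>A. psd A \<longrightarrow> psd (\<phi> A))"

definition hs_inner :: "complex^'n^'n \<Rightarrow> complex^'n^'n \<Rightarrow> complex" where
  "hs_inner A B = trace (cadj A ** B)"

definition is_hs_adjoint :: "(complex^'n^'n \<Rightarrow> complex^'m^'m) \<Rightarrow> (complex^'m^'m \<Rightarrow> complex^'n^'n) \<Rightarrow> bool" where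
  "is_hs_adjoint \<phi> \<psi> \<longleftrightarrow> (\<forall>X Y. hs_inner (\<psi> Y) X = hs_inner Y (\<phi> X))"

definition block2 :: "complex^'m^'m \<Rightarrow> complex^'m^'m \<Rightarrow> complex^'m^'m \<Rightarrow> complex^'m^'m
                      \<Rightarrow> complex^('m + 'm)^('m + 'm)" where
  "block2 A B C D = (\<chi> i j. case (i, j) of
       (Inl a, Inl b) \<Rightarrow> A $ a $ b | (Inl a, Inr b) \<Rightarrow> B $ a $ b
     | (Inr a, Inl b) \<Rightarrow> C $ a $ b | (Inr a, Inr b) \<Rightarrow> D $ a $ b)"

definition gen_schwarz :: "(complex^'n^'n \<Rightarrow> complex^'m^'m) \<Rightarrow> bool" where
  "gen_schwarz \<phi> \<longleftrightarrow> clinear_map \<phi> \<and>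
     (\<forall>K. psd (block2 (\<phi> (mat 1)) (\<phi> K) (cadj (\<phi> K)) (\<phi> (cadj K ** K))))"

end

theory Submission
  imports Defs
begin


definition ip :: "complex^'n \<Rightarrow> complex^'n \<Rightarrow> complex" where
  "ip x y = (\<Sum>i\<in>UNIV. cnj (x $ i) * y $ i)"

definition outer :: "complex^'n \<Rightarrow> complex^'m \<Rightarrow> complex^'m^'n" where
  "outer a b = (\<chi> i j. a $ i * cnj (b $ j))"

lemma psd_ip: "psd A \<longleftrightarrow> cadj A = A \<and> (\<forall>x. 0 \<le> ip x (A *v x))"
  by (simp add: psd_def ip_def)

lemma cadj_cadj[simp]: "cadj (cadj A) = A"
  by (simp add: cadj_def vec_eq_iff)

lemma cadj_mult: "cadj (A ** B) = cadj B ** cadj A"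
  by (simp add: cadj_def vec_eq_iff matrix_matrix_mult_def mult.commute)

lemma cadj_add: "cadj (A + B) = cadj A + cadj B"
  by (simp add: cadj_def vec_eq_iff)

lemma cadj_diff: "cadj (A - B) = cadj A - cadj B"
  by (simp add: cadj_def vec_eq_iff)

lemma cadj_uminus: "cadj (- A) = - cadj A"
  by (simp add: cadj_def vec_eq_iff)

lemma cadj_zero[simp]: "cadj 0 = 0"
  by (simp add: cadj_def vec_eq_iff)

lemma cadj_mat[simp]: "cadj (mat c) = mat (cnj c)"
  by (simp add: cadj_def vec_eq_iff mat_def)

lemma cadj_cscale: "cadj (cscale c A) = cscale (cnj c) (cadj A)"
  by (simp add: cadj_def cscale_def vec_eq_iff)

lemma cadj_outer: "cadj (outer a b) = outer b a"
  by (simp add: cadj_def outer_def vec_eq_iff mult.commute)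

lemma cadj_inj: "cadj A = cadj B \<Longrightarrow> A = B"
  by (metis cadj_cadj)

lemma trace_cadj: "trace (cadj A) = cnj (trace A)"
  by (simp add: trace_def cadj_def)

lemma trace_cscale: "trace (cscale c A) = c * trace A"
  by (simp add: trace_def cscale_def sum_distrib_left)

lemma trace_uminus: "trace (- A) = - trace (A::complex^'n^'n)"
  by (simp add: trace_def sum_negf)

lemma cscale_mult_left: "cscale c A ** B = cscale c (A ** B)"
  by (simp add: cscale_def vec_eq_iff matrix_matrix_mult_def sum_distrib_left mult.assoc)

lemma cscale_mult_right: "A ** cscale c B = cscale c (A ** B)"
  by (simp add: cscale_def vec_eq_iff matrix_matrix_mult_def sum_distrib_left mult.left_commute)

lemma cscale_add: "cscale c (A + B) = cscale c A + cscale c B"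
  by (simp add: cscale_def vec_eq_iff distrib_left)

lemma cscale_add2: "cscale (c + d) A = cscale c A + cscale d A"
  by (simp add: cscale_def vec_eq_iff distrib_right)

lemma cscale_cscale: "cscale c (cscale d A) = cscale (c * d) A"
  by (simp add: cscale_def vec_eq_iff mult.assoc)

lemma cscale_one[simp]: "cscale 1 A = A"
  by (simp add: cscale_def vec_eq_iff)

lemma cscale_zero[simp]: "cscale 0 A = 0"
  by (simp add: cscale_def vec_eq_iff)

lemma cscale_mat: "cscale c (mat d) = mat (c * d)"
  by (simp add: cscale_def vec_eq_iff mat_def)

lemma cscale_minus1: "cscale (-1) A = - A"
  by (simp add: cscale_def vec_eq_iff)

lemma matrix_mult_uminus_left: "(- A) ** B = - (A ** (B::complex^'p^'n))"
  by (simp add: vec_eq_iff matrix_matrix_mult_def sum_negf)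

lemma matrix_mult_uminus_right: "A ** (- B) = - (A ** (B::complex^'p^'n))"
  by (simp add: vec_eq_iff matrix_matrix_mult_def sum_negf)

lemma matrix_add_rdistrib': "(A + B) ** C = A ** C + B ** (C::complex^'p^'n)"
  by (simp add: vec_eq_iff matrix_matrix_mult_def sum.distrib distrib_right)

lemma matrix_diff_ldistrib: "A ** (B - C) = A ** B - A ** (C::complex^'p^'n)"
  by (simp add: vec_eq_iff matrix_matrix_mult_def sum_subtractf right_diff_distrib)

lemma matrix_diff_rdistrib: "(A - B) ** C = A ** C - B ** (C::complex^'p^'n)"
  by (simp add: vec_eq_iff matrix_matrix_mult_def sum_subtractf left_diff_distrib)

lemma ip_conj: "ip y x = cnj (ip x y)"
  by (simp add: ip_def mult.commute)

lemma ip_adj: "ip x (A *v y) = ip (cadj A *v x) y"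
  unfolding ip_def cadj_def matrix_vector_mult_def
  apply (simp add: sum_distrib_left sum_distrib_right mult_ac)
  apply (rule sum.swap)
  done

lemma ip_self: "ip x x = of_real (\<Sum>i\<in>UNIV. (cmod (x $ i))\<^sup>2)"
  unfolding ip_def of_real_sum
proof (rule sum.cong)
  fix i show "cnj (x $ i) * x $ i = complex_of_real ((cmod (x $ i))\<^sup>2)"
    by (simp only: complex_norm_square mult.commute)
qed simp

lemma ip_self_ge0: "0 \<le> ip x x"
proof -
  have "0 \<le> (\<Sum>i\<in>UNIV. (cmod (x $ i))\<^sup>2)" by (simp add: sum_nonneg)
  then show ?thesis by (simp only: ip_self less_eq_complex_def Re_complex_of_real Im_complex_of_real zero_complex.sel)
qed

lemma ip_self_eq0: "ip x x = 0 \<longleftrightarrow> x = 0"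
proof
  assume "ip x x = 0"
  then have "(\<Sum>i\<in>UNIV. (cmod (x $ i))\<^sup>2) = 0" unfolding ip_self by (simp only: of_real_eq_0_iff)
  then have "\<forall>i\<in>UNIV. (cmod (x $ i))\<^sup>2 = 0"
    by (subst (asm) sum_nonneg_eq_0_iff) auto
  then show "x = 0" by (simp add: vec_eq_iff)
qed (simp add: ip_def)

lemma ip_add_right: "ip x (y + z) = ip x y + ip x z"
  by (simp add: ip_def distrib_left sum.distrib)
lemma ip_add_left: "ip (x + y) z = ip x z + ip y z"
  by (simp add: ip_def distrib_right sum.distrib)
lemma ip_diff_right: "ip x (y - z) = ip x y - ip x z"
  by (simp add: ip_def right_diff_distrib sum_subtractf)
lemma ip_diff_left: "ip (x - y) z = ip x z - ip y z"
  by (simp add: ip_def left_diff_distrib sum_subtractf)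
lemma ip_scale_right: "ip x (c *s y) = c * ip x y"
  by (simp add: ip_def sum_distrib_left mult_ac)
lemma ip_scale_left: "ip (c *s x) y = cnj c * ip x y"
  by (simp add: ip_def sum_distrib_left mult_ac)
lemma ip_zero_right[simp]: "ip x 0 = 0" by (simp add: ip_def)
lemma ip_zero_left[simp]: "ip 0 x = 0" by (simp add: ip_def)

lemma trace_mult_outer: "trace (A ** outer x y) = ip y (A *v x)"
  unfolding trace_def ip_def outer_def matrix_matrix_mult_def matrix_vector_mult_def
  by (simp add: sum_distrib_left sum_distrib_right mult_ac)

lemma hs_inner_outer: "hs_inner (outer a b) M = ip a (M *v b)"
  by (simp add: hs_inner_def cadj_outer trace_mul_sym[of "outer b a"] trace_mult_outer)

lemma hs_inner_conj: "hs_inner B A = cnj (hs_inner A B)"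
  unfolding hs_inner_def
  by (metis cadj_cadj cadj_mult trace_cadj)

lemma outer_mult_vec: "outer a b *v x = ip b x *s a"
  by (simp add: outer_def ip_def matrix_vector_mult_def vec_eq_iff sum_distrib_left mult_ac)

lemma outer_mult_outer: "outer a b ** outer c d = cscale (ip b c) (outer a d)"
    unfolding outer_def ip_def cscale_def matrix_matrix_mult_def vec_eq_iff
  by (simp add: sum_distrib_left sum_distrib_right mult_ac)



definition pen :: "complex^'c^'r \<Rightarrow> complex^'r^'c \<Rightarrow> bool" where
  "pen A B \<longleftrightarrow> A ** B ** A = A \<and> B ** A ** B = B \<and>
                      cadj (A ** B) = A ** B \<and> cadj (B ** A) = B ** A"

lemma cadj_mult3: "cadj (A ** B ** C) = cadj C ** cadj B ** cadj A"
  by (simp add: cadj_mult matrix_mul_assoc)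

lemma pen_unique:
  assumes p: "pen A B" and q: "pen A B'"
  shows "B = B'"
proof -
  from p have p1: "A ** B ** A = A" and p2: "B ** A ** B = B" and p3: "cadj (A ** B) = A ** B"
    and p4: "cadj (B ** A) = B ** A" by (auto simp: pen_def)
  from q have q1: "A ** B' ** A = A" and q2: "B' ** A ** B' = B'" and q3: "cadj (A ** B') = A ** B'"
    and q4: "cadj (B' ** A) = B' ** A" by (auto simp: pen_def)
  have a1: "cadj A = cadj A ** (A ** B')"
    by (metis q1 q3 cadj_mult)
  have a2: "cadj A = (B' ** A) ** cadj A"
    by (metis q1 q4 cadj_mult matrix_mul_assoc)
  have AB: "A ** B = A ** B'"
  proof -
    have "A ** B = cadj B ** cadj A" by (metis p3 cadj_mult)
    also have "\<dots> = cadj B ** cadj A ** (A ** B')" by (metis a1 matrix_mul_assoc)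
    also have "\<dots> = cadj (A ** B) ** (A ** B')" by (simp add: cadj_mult)
    also have "\<dots> = (A ** B ** A) ** B'" by (simp add: p3 matrix_mul_assoc)
    finally show ?thesis by (simp add: p1)
  qed
  have BA: "B ** A = B' ** A"
  proof -
    have "B ** A = cadj A ** cadj B" by (metis p4 cadj_mult)
    also have "\<dots> = (B' ** A) ** cadj A ** cadj B" using a2 by simp
    also have "\<dots> = (B' ** A) ** cadj (B ** A)" by (simp add: cadj_mult matrix_mul_assoc)
    also have "\<dots> = B' ** (A ** B ** A)" by (simp add: p4 matrix_mul_assoc)
    finally show ?thesis by (simp add: p1)
  qed
  have "B = B ** (A ** B)" using p2 by (simp add: matrix_mul_assoc)
  also have "\<dots> = B ** (A ** B')" by (simp add: AB)
  also have "\<dots> = B' ** A ** B'" by (simp add: BA matrix_mul_assoc)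
  finally show ?thesis using q2 by simp
qed

lemma mp_inv_eqI: "pen A B \<Longrightarrow> mp_inv A = B"
  unfolding mp_inv_def pen_def[symmetric]
  by (rule the_equality) (auto intro: pen_unique)

lemma pen_mp_inv: "pen A B \<Longrightarrow> pen A (mp_inv A)"
  using mp_inv_eqI by metis

lemma pen_cadj: "pen A B \<Longrightarrow> pen (cadj A) (cadj B)"
  unfolding pen_def
  by (metis cadj_cadj cadj_mult cadj_mult3)

lemma matrix_eq_columns: "(\<And>j. column j A = column j B) \<Longrightarrow> A = B"
  by (simp add: column_def vec_eq_iff)

lemma column_mult: "column j (A ** B) = A *v column j B"
  by (simp add: column_def matrix_matrix_mult_def matrix_vector_mult_def vec_eq_iff)

lemma mult_axis: "(A::complex^'n^'m) *v axis k 1 = column k A"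
  by (simp add: column_def matrix_vector_mult_def vec_eq_iff axis_def if_distrib cong: if_cong)

lemma mv_scaleR: "(C::complex^'n^'m) *v (r *\<^sub>R g) = r *\<^sub>R (C *v g)"
  by (simp add: matrix_vector_mult_def vec_eq_iff scaleR_sum_right mult_scaleR_right)

lemma mv_scale: "(C::complex^'n^'m) *v (c *s g) = c *s (C *v g)"
  by (simp add: matrix_vector_mult_def vec_eq_iff sum_distrib_left mult_ac)

lemma mv_add: "(C::complex^'n^'m) *v (x + y) = C *v x + C *v y"
  by (simp add: matrix_vector_right_distrib)

lemma mv_diff: "(C::complex^'n^'m) *v (x - y) = C *v x - C *v y"
  by (simp add: matrix_vector_mult_def vec_eq_iff sum_subtractf right_diff_distrib)

lemma inner_ip: "inner z w = Re (ip (z::complex^'n) w)"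
  by (simp add: inner_vec_def ip_def inner_complex_def Re_sum)

lemma adj_zero: "cadj D ** D = 0 \<Longrightarrow> (D::complex^'n^'m) = 0"
proof -
  assume h: "cadj D ** D = 0"
  show "D = 0"
  proof (rule matrix_eq_columns)
    fix j
    have "ip (column j D) (column j D) = (cadj D ** D) $ j $ j"
      by (simp add: ip_def cadj_def column_def matrix_matrix_mult_def)
    then have "ip (column j D) (column j D) = 0" using h by simp
    then show "column j D = column j 0" by (simp add: ip_self_eq0 column_def vec_eq_iff)
  qed
qed

lemma herm_KR:
  assumes "cadj C = C" "C ** (C ** E) = 0"
  shows "C ** (E::complex^'p^'n) = (0::complex^'p^'n)"
proof (rule adj_zero)
  have "cadj (C ** E) ** (C ** E) = cadj E ** (C ** (C ** E))"
    by (simp add: cadj_mult assms(1) matrix_mul_assoc)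
  then show "cadj (C ** E) ** (C ** E) = 0" using assms(2) by simp
qed

lemma herm_decomp1:
  fixes C :: "complex^'n^'n"
  assumes h: "cadj C = C"
  shows "\<exists>g z. y = C *v g + z \<and> C *v z = 0"
proof -
  let ?S = "range (\<lambda>x. C *v x)"
  have s0: "0 \<in> ?S" by (rule range_eqI[where x=0]) simp
  have s1: "x + y \<in> ?S" if a: "x \<in> ?S" "y \<in> ?S" for x y
  proof -
    obtain a b where "x = C *v a" "y = C *v b" using a by blast
    then show ?thesis by (intro range_eqI[where x="a+b"]) (simp add: mv_add)
  qed
  have s2: "c *\<^sub>R x \<in> ?S" if a: "x \<in> ?S" for x c
  proof -
    obtain a where "x = C *v a" using a by blast
    then show ?thesis by (intro range_eqI[where x="c *\<^sub>R a"]) (simp add: mv_scaleR)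
  qed
  have sub: "subspace ?S"
    unfolding subspace_def using s0 s1 s2 by blast
  obtain r z where r: "r \<in> span ?S" and z: "\<And>w. w \<in> span ?S \<Longrightarrow> orthogonal z w" and y: "y = r + z"
    by (rule orthogonal_subspace_decomp_exists[of ?S y]) blast
  have spanS: "span ?S = ?S" using sub by (simp add: span_eq_iff)
  from r obtain g where g: "r = C *v g" unfolding spanS by blast
  have zc: "ip z (C *v x) = 0" for x
  proof -
    have "orthogonal z (C *v x)" using z unfolding spanS by blast
    then have 1: "Re (ip z (C *v x)) = 0" by (simp add: orthogonal_def inner_ip)
    have "orthogonal z (C *v (\<i> *s x))" using z unfolding spanS by blast
    then have "Re (ip z (C *v (\<i> *s x))) = 0" by (simp add: orthogonal_def inner_ip)
    then have 2: "Im (ip z (C *v x)) = 0" by (simp add: mv_scale ip_scale_right)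
    from 1 2 show ?thesis by (simp add: complex_eq_iff)
  qed
  have "ip (C *v z) (C *v z) = ip z (C *v (C *v z))"
    by (simp add: ip_adj h)
  then have "C *v z = 0" using zc by (simp add: ip_self_eq0)
  with g y show ?thesis by blast
qed

lemma herm_decomp2:
  fixes C :: "complex^'n^'n"
  assumes h: "cadj C = C"
  shows "\<exists>h. C *v (y - C *v (C *v h)) = 0"
proof -
  obtain g z where 1: "y = C *v g + z" "C *v z = 0" using herm_decomp1[OF h] by blast
  obtain h' z' where 2: "g = C *v h' + z'" "C *v z' = 0" using herm_decomp1[OF h] by blast
  have "C *v (C *v h') = C *v g" using 2 by (simp add: mv_add)
  then have "y - C *v (C *v h') = z" using 1 by simp
  then show ?thesis using 1 by blast
qed

lemma herm_mp_exists:
  fixes C :: "complex^'n^'n"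
  assumes h: "cadj C = C"
  shows "\<exists>M. pen C M"
proof -
  define hh where "hh j = (SOME h. C *v (axis j 1 - C *v (C *v h)) = 0)" for j :: 'n
  have hh: "C *v (axis j 1 - C *v (C *v hh j)) = 0" for j
    unfolding hh_def by (rule someI_ex) (rule herm_decomp2[OF h])
  define H where "H = (\<chi> i j. hh j $ i)"
  define G where "G = C ** H"
  have colH: "column j H = hh j" for j by (simp add: H_def column_def vec_eq_iff)
  have F1: "C ** (C ** G) = C"
  proof (rule matrix_eq_columns)
    fix j
    have "C *v axis j 1 = C *v (C *v (C *v hh j))" using hh[of j] by (simp add: mv_diff)
    then show "column j (C ** (C ** G)) = column j C"
      by (simp add: G_def column_mult colH mult_axis)
  qed
  define Q where "Q = C ** G"
  have CQ: "C ** Q = C" using F1 by (simp add: Q_def)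
  have CGC: "C ** G ** C = C"
  proof -
    have "C ** (G ** C - mat 1) = 0"
    proof (rule herm_KR[OF h])
      show "C ** (C ** (G ** C - mat 1)) = 0"
        by (simp add: matrix_diff_ldistrib matrix_mul_assoc F1[unfolded matrix_mul_assoc])
    qed
    then show ?thesis by (simp add: matrix_diff_ldistrib matrix_mul_assoc)
  qed
  have QQ: "cadj Q ** Q = Q"
  proof -
    have "cadj Q ** C = C" using CQ by (metis cadj_mult h)
    then have "cadj Q ** C ** G = C ** G" by simp
    then show ?thesis by (simp add: Q_def matrix_mul_assoc)
  qed
  have Qh: "cadj Q = Q" by (metis QQ cadj_cadj cadj_mult)
  have RQ: "G ** C = Q"
  proof -
    have "C ** (H ** C - G) = 0"
    proof (rule herm_KR[OF h])
      have "C ** (C ** (H ** C - G)) = (C ** G) ** C - C ** (C ** G)"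
        by (simp add: matrix_diff_ldistrib matrix_mul_assoc G_def)
      also have "\<dots> = 0" using CGC F1 by simp
      finally show "C ** (C ** (H ** C - G)) = 0" .
    qed
    then show ?thesis by (simp add: matrix_diff_ldistrib matrix_mul_assoc G_def Q_def)
  qed
  define M where "M = G ** C ** G"
  have "pen C M"
    unfolding pen_def
  proof (intro conjI)
    show "C ** M ** C = C" unfolding M_def
      by (metis CGC matrix_mul_assoc)
    show "M ** C ** M = M" unfolding M_def
      by (metis CGC matrix_mul_assoc)
    have "C ** M = Q" unfolding M_def Q_def by (metis CGC matrix_mul_assoc)
    then show "cadj (C ** M) = C ** M" using Qh by simp
    have "M ** C = Q" unfolding M_def by (metis CGC RQ matrix_mul_assoc)
    then show "cadj (M ** C) = M ** C" using Qh by simp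
  qed
  then show ?thesis by blast
qed

lemma herm_mp:
  fixes C :: "complex^'n^'n"
  assumes h: "cadj C = C"
  shows "pen C (mp_inv C)" and "cadj (mp_inv C) = mp_inv C"
proof -
  obtain M where M: "pen C M" using herm_mp_exists[OF h] by blast
  then show p: "pen C (mp_inv C)" by (rule pen_mp_inv)
  have "pen C (cadj (mp_inv C))" using pen_cadj[OF p] h by simp
  then show "cadj (mp_inv C) = mp_inv C" using p pen_unique by blast
qed



lemma psd_herm: "psd A \<Longrightarrow> cadj A = A"
  by (simp add: psd_def)

lemma psd_qf: "psd A \<Longrightarrow> 0 \<le> ip x (A *v x)"
  by (simp add: psd_ip)

lemma herm_qf_real: "cadj A = A \<Longrightarrow> Im (ip x (A *v x)) = 0"
proof -
  assume h: "cadj A = A"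
  have "ip x (A *v x) = ip (A *v x) x"
    using ip_adj[of x A x] h by simp
  also have "\<dots> = cnj (ip x (A *v x))" by (rule ip_conj)
  finally have "ip x (A *v x) = cnj (ip x (A *v x))" .
  then have "Im (ip x (A *v x)) = Im (cnj (ip x (A *v x)))" by simp
  then show ?thesis by simp
qed

lemma ip_axis_left: "ip (axis i 1) y = y $ i"
proof -
  have "ip (axis i 1) y = (\<Sum>j\<in>UNIV. if j = i then y $ j else 0)"
    unfolding ip_def by (rule sum.cong) (auto simp: axis_def)
  then show ?thesis by simp
qed

lemma herm_entry: "cadj X = X \<Longrightarrow> cnj (X $ j $ i) = X $ i $ j"
proof -
  assume h: "cadj X = X"
  have "cadj X $ i $ j = X $ i $ j" using h by simp
  then show ?thesis by (simp add: cadj_def)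
qed

lemma mv_axis_comp: "((A::complex^'n^'m) *v axis j 1) $ i = A $ i $ j"
  by (simp add: mult_axis column_def)

lemma complex_nonneg_Re: "0 \<le> (z::complex) \<Longrightarrow> 0 \<le> Re z"
  by (simp add: less_eq_complex_def)

lemma psd_diag_zero:
  assumes p: "psd X" and z: "X $ k $ k = 0"
  shows "X $ k $ j = 0"
proof (rule ccontr)
  assume a0: "X $ k $ j \<noteq> 0"
  define a where "a = X $ k $ j"
  have h: "cadj X = X" using p by (simp add: psd_def)
  have hx: "X $ j $ k = cnj a" using herm_entry[OF h, of k j] by (simp add: a_def)
  define d where "d = Re (X $ j $ j)"
  have ca: "cmod a > 0" using a0 by (simp add: a_def)
  define r where "r = (\<bar>d\<bar> + 1) / (2 * (cmod a)\<^sup>2)"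
  define t where "t = - (of_real r * a)"
  define x where "x = t *s axis k 1 + axis j 1"
  have "ip x (X *v x) = t * (cnj t * X $ k $ k + X $ j $ k) + (cnj t * X $ k $ j + X $ j $ j)"
    unfolding x_def mv_add mv_scale ip_add_left ip_add_right ip_scale_left ip_scale_right
      ip_axis_left mv_axis_comp vector_add_component vector_smult_component ..
  also have "\<dots> = - (2 * of_real r * (a * cnj a)) + X $ j $ j"
    unfolding t_def z hx a_def[symmetric] by (simp add: algebra_simps)
  finally have e: "ip x (X *v x) = - (2 * of_real r * (a * cnj a)) + X $ j $ j" .
  have ra: "Re (a * cnj a) = (cmod a)\<^sup>2" by (simp add: complex_norm_square[symmetric] del: of_real_power)
  have "0 \<le> Re (ip x (X *v x))" using psd_qf[OF p] complex_nonneg_Re by blast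
  then have "0 \<le> - (2 * r * (cmod a)\<^sup>2) + d" unfolding e d_def using ra by simp
  moreover have "2 * r * (cmod a)\<^sup>2 = \<bar>d\<bar> + 1" using ca by (simp add: r_def)
  ultimately show False by linarith
qed

lemma matrix_diff_mv: "((A::complex^'n^'m) - B) *v y = A *v y - B *v y"
  by (simp add: matrix_vector_mult_def vec_eq_iff sum_subtractf left_diff_distrib)

lemma mv_cscale: "cscale c (A::complex^'n^'m) *v y = c *s (A *v y)"
  by (simp add: matrix_vector_mult_def vec_eq_iff cscale_def sum_distrib_left mult.assoc)

definition supp :: "complex^'n^'m \<Rightarrow> 'm set" where
  "supp X = {i. \<exists>j. X $ i $ j \<noteq> 0}"

definition wsum :: "(real \<times> (complex^'n)) list \<Rightarrow> complex^'n^'n" where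
  "wsum ps = sum_list (map (\<lambda>(c, w). cscale (of_real c) (outer w w)) ps)"

lemma wsum_Nil[simp]: "wsum [] = 0" by (simp add: wsum_def)
lemma wsum_Cons[simp]: "wsum ((c, w) # ps) = cscale (of_real c) (outer w w) + wsum ps"
  by (simp add: wsum_def)

lemma psd_decomp_step:
  fixes X :: "complex^'n^'n"
  assumes p: "psd X" and k: "k \<in> supp X"
  shows "\<exists>c w X'. c \<ge> 0 \<and> psd X' \<and> supp X' \<subset> supp X \<and> X = cscale (of_real c) (outer w w) + X'"
proof -
  have h: "cadj X = X" using p by (simp add: psd_def)
  have hx': "cnj (X $ i $ j) = X $ j $ i" for i j using herm_entry[OF h] by simp
  have hx: "X $ j $ i = cnj (X $ i $ j)" for i j by (simp add: hx')
  have kk0: "X $ k $ k \<noteq> 0"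
  proof
    assume "X $ k $ k = 0"
    then have "\<forall>j. X $ k $ j = 0" using psd_diag_zero[OF p] by blast
    then show False using k unfolding supp_def by blast
  qed
  have "X $ k $ k = ip (axis k 1) (X *v axis k 1)" by (simp add: ip_axis_left mv_axis_comp)
  then have kkge: "0 \<le> X $ k $ k" using psd_qf[OF p] by simp
  define r where "r = Re (X $ k $ k)"
  have kkr: "X $ k $ k = of_real r" using kkge by (simp add: r_def less_eq_complex_def complex_eq_iff)
  have "r \<ge> 0" using kkge unfolding r_def less_eq_complex_def by simp
  moreover have "r \<noteq> 0" using kk0 kkr by auto
  ultimately have rpos: "r > 0" by simp
  define x where "x = column k X"
  define c where "c = 1 / r"
  define X' where "X' = X - cscale (of_real c) (outer x x)"
  have X'e: "X' $ i $ j = X $ i $ j - of_real c * (X $ i $ k * X $ k $ j)" for i j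
  proof -
    have "X' $ i $ j = X $ i $ j - of_real c * (X $ i $ k * cnj (X $ j $ k))"
      by (simp add: X'_def cscale_def outer_def x_def column_def)
    then show ?thesis by (simp only: hx')
  qed
  have rowk: "X' $ k $ j = 0" for j
  proof -
    have "of_real c * (X $ k $ k * X $ k $ j) = X $ k $ j"
      unfolding kkr c_def using rpos by (simp add: field_simps)
    then show ?thesis by (simp add: X'e)
  qed
  have "supp X' \<subseteq> supp X - {k}"
  proof
    fix i assume "i \<in> supp X'"
    then obtain j where j: "X' $ i $ j \<noteq> 0" unfolding supp_def by blast
    have "i \<noteq> k" using j rowk by blast
    moreover have "i \<in> supp X"
    proof (rule ccontr)
      assume "i \<notin> supp X"
      then have "X $ i $ j = 0" "X $ i $ k = 0" unfolding supp_def by blast+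
      then have "X' $ i $ j = 0" by (simp add: X'e)
      then show False using j by blast
    qed
    ultimately show "i \<in> supp X - {k}" by simp
  qed
  then have ss: "supp X' \<subset> supp X" using k by blast
  have hX': "cadj X' = X'"
    by (simp add: X'_def cadj_diff cadj_cscale cadj_outer h)
  have qX': "0 \<le> ip y (X' *v y)" for y
  proof -
    define \<beta> where "\<beta> = ip x y"
    have b2: "(X *v y) $ k = \<beta>"
      by (simp add: \<beta>_def ip_def x_def column_def matrix_vector_mult_def hx' mult.commute)
    have b3: "ip y (X *v axis k 1) = cnj \<beta>"
      by (simp add: \<beta>_def ip_def x_def column_def mv_axis_comp mult.commute)
    define t where "t = \<beta> / of_real r"
    define z where "z = y - t *s axis k 1"
    have "ip z (X *v z) = ip y (X *v y) - cnj t * (X *v y) $ k - t * (ip y (X *v axis k 1) - cnj t * (X *v axis k 1) $ k)"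
      unfolding z_def mv_diff mv_scale ip_diff_left ip_diff_right ip_scale_left ip_scale_right
          ip_axis_left vector_minus_component vector_smult_component
      by simp
    also have "\<dots> = ip y (X *v y) - cnj \<beta> * \<beta> / of_real r"
      unfolding b2 b3 mv_axis_comp kkr t_def using rpos by (simp add: field_simps)
    finally have e1: "ip z (X *v z) = ip y (X *v y) - cnj \<beta> * \<beta> / of_real r" .
    have "ip y (X' *v y) = ip y (X *v y) - of_real c * (ip x y * ip y x)"
      unfolding X'_def matrix_diff_mv mv_cscale outer_mult_vec ip_diff_right ip_scale_right by simp
    also have "\<dots> = ip y (X *v y) - cnj \<beta> * \<beta> / of_real r"
      by (simp add: c_def \<beta>_def ip_conj[of y x] field_simps)
    finally have "ip y (X' *v y) = ip z (X *v z)" using e1 by simp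
    then show ?thesis using psd_qf[OF p] by simp
  qed
  have "psd X'" using hX' qX' by (simp add: psd_ip)
  moreover have "X = cscale (of_real c) (outer x x) + X'" by (simp add: X'_def)
  moreover have "c \<ge> 0" using rpos by (simp add: c_def)
  ultimately show ?thesis using ss by blast
qed

lemma psd_decomp:
  fixes X :: "complex^'n^'n"
  assumes "psd X"
  shows "\<exists>ps. (\<forall>p\<in>set ps. fst p \<ge> 0) \<and> X = wsum ps"
  using assms
proof (induction "card (supp X)" arbitrary: X rule: less_induct)
  case less
  show ?case
  proof (cases "supp X = {}")
    case True
    then have "X = 0" by (auto simp: supp_def vec_eq_iff)
    then show ?thesis by (intro exI[of _ "[]"]) simp
  next
    case False
    then obtain k where "k \<in> supp X" by blast
    then obtain c w X' where cw: "c \<ge> 0" "psd X'" "supp X' \<subset> supp X"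
        "X = cscale (of_real c) (outer w w) + X'"
      using psd_decomp_step[OF less.prems] by blast
    have "card (supp X') < card (supp X)" using cw(3) by (simp add: psubset_card_mono)
    then obtain ps where ps: "\<forall>p\<in>set ps. fst p \<ge> 0" "X' = wsum ps"
      using less.hyps cw(2) by blast
    show ?thesis using ps cw by (intro exI[of _ "(c, w) # ps"]) auto
  qed
qed

lemma trace_mult_add_right: "trace (A ** (B + C)) = trace (A ** B) + trace (A ** (C::complex^'n^'n))"
  by (simp add: matrix_add_ldistrib trace_add)

lemma trace_mult_cscale_right: "trace (A ** cscale c B) = c * trace (A ** (B::complex^'n^'n))"
  by (simp add: cscale_mult_right trace_cscale)

lemma trace_psd_mult:
  fixes M N :: "complex^'n^'n"
  assumes "psd M" "psd N"
  shows "0 \<le> trace (M ** N)"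
proof -
  obtain ps where ps: "\<forall>p\<in>set ps. fst p \<ge> 0" "N = wsum ps" using psd_decomp[OF assms(2)] by blast
  have "0 \<le> trace (M ** wsum ps)" using ps(1)
  proof (induction ps)
    case Nil then show ?case by (simp add: trace_def)
  next
    case (Cons p ps)
    obtain c w where p: "p = (c, w)" by fastforce
    have "0 \<le> complex_of_real c" using Cons.prems p by (simp add: less_eq_complex_def)
    then have "0 \<le> of_real c * ip w (M *v w)"
      using psd_qf[OF assms(1)] by (simp add: mult_nonneg_nonneg)
    moreover have "0 \<le> trace (M ** wsum ps)" using Cons by simp
    ultimately show ?case
      by (simp add: p trace_mult_add_right trace_mult_cscale_right trace_mult_outer)
  qed
  then show ?thesis using ps by simp
qed



lemma lin_add: "clinear_map \<phi> \<Longrightarrow> \<phi> (A + B) = \<phi> A + \<phi> B"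
  by (simp add: clinear_map_def)
lemma lin_scale: "clinear_map \<phi> \<Longrightarrow> \<phi> (cscale c A) = cscale c (\<phi> A)"
  by (simp add: clinear_map_def)
lemma lin_zero: "clinear_map \<phi> \<Longrightarrow> \<phi> 0 = 0"
  using lin_scale[of \<phi> 0 0] by simp
lemma lin_uminus: "clinear_map \<phi> \<Longrightarrow> \<phi> (- A) = - \<phi> A"
  using lin_scale[of \<phi> "-1" A] by (simp add: cscale_minus1)
lemma lin_diff: "clinear_map \<phi> \<Longrightarrow> \<phi> (A - B) = \<phi> A - \<phi> B"
  using lin_add[of \<phi> A "- B"] lin_uminus[of \<phi> B] by simp

lemma mat_mv: "mat c *v (x::complex^'n) = c *s x"
  by (simp add: matrix_vector_mult_def mat_def vec_eq_iff if_distrib if_distribR cong: if_cong)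

lemma psd_outer: "psd (outer x x)"
proof -
  have "0 \<le> ip y (outer x x *v y)" for y
  proof -
    have "ip y (outer x x *v y) = cnj (ip x y) * ip x y"
      by (simp add: outer_mult_vec ip_scale_right ip_conj[of y x])
    also have "\<dots> = of_real ((cmod (ip x y))\<^sup>2)" by (subst complex_norm_square) (simp add: mult.commute)
    finally show ?thesis by (simp add: less_eq_complex_def)
  qed
  then show ?thesis by (simp add: psd_ip cadj_outer)
qed

lemma psd_adj_mult: "psd (cadj K ** K)"
proof -
  have "0 \<le> ip y ((cadj K ** K) *v y)" for y
  proof -
    have "ip y ((cadj K ** K) *v y) = ip (K *v y) (K *v y)"
      using ip_adj[of y "cadj K" "K *v y"] by (simp add: matrix_vector_mul_assoc[symmetric])
    then show ?thesis by (simp add: ip_self_ge0)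
  qed
  then show ?thesis by (simp add: psd_ip cadj_mult)
qed

lemma psd_mat: "c \<ge> 0 \<Longrightarrow> psd (mat (of_real c))"
proof -
  assume c: "c \<ge> 0"
  have "0 \<le> ip y (mat (of_real c) *v y)" for y
  proof -
    have "0 \<le> (complex_of_real c)" using c by (simp add: less_eq_complex_def)
    then show ?thesis by (simp add: mat_mv ip_scale_right ip_self_ge0 mult_nonneg_nonneg)
  qed
  then show ?thesis unfolding psd_ip by simp blast
qed

lemma psd_mat1: "psd (mat 1)"
  using psd_mat[of 1] by simp

lemma prod_le_sumsq:
  fixes a :: "'n::finite \<Rightarrow> real"
  shows "\<bar>a i\<bar> * \<bar>a j\<bar> \<le> (\<Sum>k\<in>UNIV. (a k)\<^sup>2)"
proof -
  have "(a i)\<^sup>2 \<le> (\<Sum>k\<in>UNIV. (a k)\<^sup>2)" "(a j)\<^sup>2 \<le> (\<Sum>k\<in>UNIV. (a k)\<^sup>2)"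
    by (auto intro!: member_le_sum)
  moreover have "2 * (\<bar>a i\<bar> * \<bar>a j\<bar>) \<le> (a i)\<^sup>2 + (a j)\<^sup>2"
    using sum_squares_bound[of "\<bar>a i\<bar>" "\<bar>a j\<bar>"] by (simp add: power2_abs)
  ultimately show ?thesis by linarith
qed

lemma herm_shift_psd:
  fixes H :: "complex^'n^'n"
  assumes h: "cadj H = H"
  defines "c \<equiv> (\<Sum>i\<in>UNIV. \<Sum>j\<in>UNIV. cmod (H $ i $ j))"
  shows "psd (H + mat (of_real c))"
proof -
  have "0 \<le> ip x ((H + mat (of_real c)) *v x)" for x
  proof -
    define S where "S = (\<Sum>k\<in>UNIV. (cmod (x $ k))\<^sup>2)"
    have ipS: "ip x x = of_real S" by (simp add: ip_self S_def del: of_real_sum of_real_power)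
    have "cmod (ip x (H *v x)) \<le> (\<Sum>i\<in>UNIV. \<Sum>j\<in>UNIV. cmod (x $ i) * cmod (H $ i $ j) * cmod (x $ j))"
    proof -
      have "cmod (ip x (H *v x)) \<le> (\<Sum>i\<in>UNIV. cmod (cnj (x $ i) * (H *v x) $ i))"
        unfolding ip_def by (rule norm_sum)
      also have "\<dots> \<le> (\<Sum>i\<in>UNIV. \<Sum>j\<in>UNIV. cmod (x $ i) * cmod (H $ i $ j) * cmod (x $ j))"
      proof (rule sum_mono)
        fix i
        have "cmod ((H *v x) $ i) \<le> (\<Sum>j\<in>UNIV. cmod (H $ i $ j * x $ j))"
          unfolding matrix_vector_mult_def by (simp add: norm_sum)
        then have "cmod (x $ i) * cmod ((H *v x) $ i) \<le> cmod (x $ i) * (\<Sum>j\<in>UNIV. cmod (H $ i $ j) * cmod (x $ j))"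
          by (simp add: mult_left_mono norm_mult)
        then show "cmod (cnj (x $ i) * (H *v x) $ i) \<le> (\<Sum>j\<in>UNIV. cmod (x $ i) * cmod (H $ i $ j) * cmod (x $ j))"
          by (simp add: norm_mult sum_distrib_left mult.assoc)
      qed
      finally show ?thesis .
    qed
    also have "\<dots> \<le> (\<Sum>i\<in>UNIV. \<Sum>j\<in>UNIV. cmod (H $ i $ j) * S)"
    proof (intro sum_mono)
      fix i j
      have "cmod (x $ i) * cmod (x $ j) \<le> S"
        using prod_le_sumsq[of "\<lambda>k. cmod (x $ k)" i j] by (simp add: S_def)
      then have "cmod (H $ i $ j) * (cmod (x $ i) * cmod (x $ j)) \<le> cmod (H $ i $ j) * S"
        by (simp add: mult_left_mono)
      then show "cmod (x $ i) * cmod (H $ i $ j) * cmod (x $ j) \<le> cmod (H $ i $ j) * S"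
        by (simp add: mult_ac)
    qed
    also have "\<dots> = c * S" by (simp add: c_def sum_distrib_right)
    finally have b: "cmod (ip x (H *v x)) \<le> c * S" .
    have "Re (ip x (H *v x)) \<ge> - (c * S)" using b abs_Re_le_cmod[of "ip x (H *v x)"] by linarith
    moreover have "Im (ip x (H *v x)) = 0" using herm_qf_real[OF h] by blast
    moreover have "ip x ((H + mat (of_real c)) *v x) = ip x (H *v x) + of_real c * of_real S"
      by (simp add: matrix_vector_mult_add_rdistrib ip_add_right mat_mv ip_scale_right ipS)
    ultimately show ?thesis by (simp add: less_eq_complex_def)
  qed
  moreover have "cadj (H + mat (of_real c)) = H + mat (of_real c)"
    by (simp add: cadj_add h)
  ultimately show ?thesis by (simp add: psd_ip)
qed

lemma pos_herm:
  assumes p: "positive_map \<phi>" and h: "cadj H = H"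
  shows "cadj (\<phi> H) = \<phi> H"
proof -
  have l: "clinear_map \<phi>" using p by (simp add: positive_map_def)
  define c where "c = (\<Sum>i\<in>UNIV. \<Sum>j\<in>UNIV. cmod (H $ i $ j))"
  have c0: "c \<ge> 0" by (simp add: c_def sum_nonneg)
  have 1: "psd (\<phi> (H + mat (of_real c)))"
    using p herm_shift_psd[OF h] unfolding positive_map_def c_def by blast
  have 2: "psd (\<phi> (mat (of_real c)))" using p psd_mat[OF c0] unfolding positive_map_def by blast
  have "\<phi> H = \<phi> (H + mat (of_real c)) - \<phi> (mat (of_real c))"
    using lin_diff[OF l, of "H + mat (of_real c)" "mat (of_real c)"] by simp
  then show ?thesis using 1 2 by (simp add: cadj_diff psd_herm)
qed

lemma pos_adj:
  assumes p: "positive_map \<phi>"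
  shows "\<phi> (cadj Y) = cadj (\<phi> Y)"
proof -
  have l: "clinear_map \<phi>" using p by (simp add: positive_map_def)
  define H1 where "H1 = cscale (1/2) (Y + cadj Y)"
  define H2 where "H2 = cscale (- \<i>/2) (Y - cadj Y)"
  have h1: "cadj H1 = H1" by (simp add: H1_def cadj_cscale cadj_add add.commute)
  have h2: "cadj H2 = H2"
    by (simp add: H2_def cadj_def cscale_def vec_eq_iff algebra_simps)
  have Y: "Y = H1 + cscale \<i> H2"
    by (simp add: H1_def H2_def cscale_def cadj_def vec_eq_iff field_simps)
  have Ya: "cadj Y = H1 + cscale (- \<i>) H2"
    by (simp add: H1_def H2_def cscale_def cadj_def vec_eq_iff field_simps)
  have "\<phi> (cadj Y) = \<phi> H1 + cscale (- \<i>) (\<phi> H2)"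
    unfolding Ya by (simp add: lin_add[OF l] lin_scale[OF l])
  also have "\<dots> = cadj (\<phi> H1 + cscale \<i> (\<phi> H2))"
    using pos_herm[OF p h1] pos_herm[OF p h2] by (simp add: cadj_add cadj_cscale)
  also have "\<dots> = cadj (\<phi> Y)"
  proof -
    have "\<phi> Y = \<phi> (H1 + cscale \<i> H2)" using Y by simp
    then show ?thesis by (simp add: lin_add[OF l] lin_scale[OF l])
  qed
  finally show ?thesis .
qed

lemma hs_inner_mat1: "hs_inner (mat 1) M = trace M"
  by (simp add: hs_inner_def)

lemma hs_nondeg:
  fixes A B :: "complex^'n^'n"
  assumes "\<And>W. hs_inner A W = hs_inner B W"
  shows "A = B"
proof -
  have e: "hs_inner A (outer (axis i 1) (axis j 1)) = cnj (A $ i $ j)" for A :: "complex^'n^'n" and i j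
    by (simp add: hs_inner_def trace_mult_outer ip_axis_left mv_axis_comp cadj_def)
  have "A $ i $ j = B $ i $ j" for i j
    using assms[of "outer (axis i 1) (axis j 1)"] unfolding e by simp
  then show ?thesis by (simp add: vec_eq_iff)
qed

lemma trace_psi:
  assumes "is_hs_adjoint \<phi> \<psi>"
  shows "trace (\<psi> Z) = cnj (trace (cadj Z ** \<phi> (mat 1)))"
proof -
  have "trace (\<psi> Z) = hs_inner (mat 1) (\<psi> Z)" by (simp add: hs_inner_mat1)
  also have "\<dots> = cnj (hs_inner (\<psi> Z) (mat 1))" by (rule hs_inner_conj)
  also have "\<dots> = cnj (hs_inner Z (\<phi> (mat 1)))" using assms by (simp add: is_hs_adjoint_def)
  finally show ?thesis by (simp add: hs_inner_def)
qed

lemma psi_herm: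
  assumes p: "positive_map \<phi>" and a: "is_hs_adjoint \<phi> \<psi>" and h: "cadj Z = Z"
  shows "cadj (\<psi> Z) = \<psi> Z"
proof (rule hs_nondeg)
  fix W
  have adj: "hs_inner (\<psi> Y) X = hs_inner Y (\<phi> X)" for X Y using a by (simp add: is_hs_adjoint_def)
  have "hs_inner (cadj (\<psi> Z)) W = trace (\<psi> Z ** W)" by (simp add: hs_inner_def)
  also have "\<dots> = cnj (trace (cadj (\<psi> Z ** W)))" by (simp add: trace_cadj)
  also have "\<dots> = cnj (trace (cadj W ** cadj (\<psi> Z)))" by (simp only: cadj_mult)
  also have "\<dots> = cnj (trace (cadj (\<psi> Z) ** cadj W))" by (rule arg_cong[where f=cnj], rule trace_mul_sym)
  also have "\<dots> = cnj (hs_inner (\<psi> Z) (cadj W))" by (simp only: hs_inner_def)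
  also have "\<dots> = cnj (hs_inner Z (\<phi> (cadj W)))" by (simp only: adj)
  also have "\<dots> = cnj (trace (Z ** cadj (\<phi> W)))" by (simp only: hs_inner_def h pos_adj[OF p])
  also have "\<dots> = cnj (trace (cadj (\<phi> W ** Z)))" by (simp only: cadj_mult h)
  also have "\<dots> = trace (\<phi> W ** Z)" by (simp add: trace_cadj)
  also have "\<dots> = trace (Z ** \<phi> W)" by (rule trace_mul_sym)
  also have "\<dots> = hs_inner Z (\<phi> W)" by (simp only: hs_inner_def h)
  also have "\<dots> = hs_inner (\<psi> Z) W" by (simp only: adj)
  finally show "hs_inner (cadj (\<psi> Z)) W = hs_inner (\<psi> Z) W" .
qed

lemma psi_pos:
  assumes p: "positive_map \<phi>" and a: "is_hs_adjoint \<phi> \<psi>" and z: "psd Z"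
  shows "psd (\<psi> Z)"
proof -
  have h: "cadj Z = Z" using z by (simp add: psd_def)
  have "0 \<le> ip x (\<psi> Z *v x)" for x
  proof -
    have "ip x (\<psi> Z *v x) = hs_inner (outer x x) (\<psi> Z)" by (simp add: hs_inner_outer)
    also have "\<dots> = cnj (hs_inner (\<psi> Z) (outer x x))" by (rule hs_inner_conj)
    also have "\<dots> = cnj (hs_inner Z (\<phi> (outer x x)))"
      using a by (simp only: is_hs_adjoint_def)
    also have "\<dots> = cnj (trace (Z ** \<phi> (outer x x)))"
      by (simp only: hs_inner_def h)
    finally have e: "ip x (\<psi> Z *v x) = cnj (trace (Z ** \<phi> (outer x x)))" .
    have "psd (\<phi> (outer x x))" using p psd_outer unfolding positive_map_def by blast
    then have "0 \<le> trace (Z ** \<phi> (outer x x))" using trace_psd_mult z by blast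
    then show ?thesis unfolding e by (simp add: less_eq_complex_def)
  qed
  then show ?thesis using psi_herm[OF p a h] by (simp add: psd_ip)
qed



lemma sum_UNIV_Plus: "sum f (UNIV :: ('a::finite + 'b::finite) set) = sum (\<lambda>a. f (Inl a)) UNIV + sum (\<lambda>b. f (Inr b)) UNIV"
  using sum.Plus[of "UNIV :: 'a set" "UNIV :: 'b set" f] by (simp add: comp_def)

lemma block2_simps[simp]:
  "block2 A B C D $ Inl a $ Inl b = A $ a $ b"
  "block2 A B C D $ Inl a $ Inr b = B $ a $ b"
  "block2 A B C D $ Inr a $ Inl b = C $ a $ b"
  "block2 A B C D $ Inr a $ Inr b = D $ a $ b"
  by (simp_all add: block2_def)

lemma cadj_block2: "cadj (block2 A B C D) = block2 (cadj A) (cadj C) (cadj B) (cadj D)"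
proof -
  have "cadj (block2 A B C D) $ i $ j = block2 (cadj A) (cadj C) (cadj B) (cadj D) $ i $ j" for i j
    by (cases i; cases j) (simp_all add: cadj_def)
  then show ?thesis by (simp add: vec_eq_iff)
qed

lemma trace_block2_mult:
  "trace (block2 A B C D ** block2 E F G H) =
     trace (A ** E) + trace (B ** G) + trace (C ** F) + trace (D ** H)"
  unfolding trace_def matrix_matrix_mult_def
  by (simp add: sum_UNIV_Plus sum.distrib)

definition vl :: "complex^('m + 'm) \<Rightarrow> complex^'m" where "vl w = (\<chi> i. w $ Inl i)"
definition vr :: "complex^('m + 'm) \<Rightarrow> complex^'m" where "vr w = (\<chi> i. w $ Inr i)"

lemma block2_qf:
  "ip w (block2 A B C D *v w) =
     ip (vl w) (A *v vl w) + ip (vl w) (B *v vr w) + ip (vr w) (C *v vl w) + ip (vr w) (D *v vr w)"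
  unfolding ip_def matrix_vector_mult_def vl_def vr_def
  by (simp add: sum_UNIV_Plus sum.distrib distrib_left)

lemma mult_zero_ker:
  assumes "C ** E = 0" "ker C \<subseteq> ker D"
  shows "D ** (E::complex^'p^'n) = 0"
proof (rule matrix_eq_columns)
  fix j
  have "C *v column j E = 0" using assms(1) column_mult[of j C E] by (simp add: column_def vec_eq_iff)
  then have "D *v column j E = 0" using assms(2) by (auto simp: ker_def)
  then show "column j (D ** E) = column j 0" by (subst column_mult) (simp add: column_def vec_eq_iff)
qed

lemma range_cond:
  fixes C B :: "complex^'n^'n"
  assumes h: "cadj C = C" and k: "ker C \<subseteq> ker (cadj B)"
  shows "C ** mp_inv C ** B = B"
proof -
  define Cp where "Cp = mp_inv C"
  have pn: "pen C Cp" unfolding Cp_def by (rule herm_mp(1)[OF h])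
  then have c1: "C ** Cp ** C = C" and c3: "cadj (C ** Cp) = C ** Cp" unfolding pen_def by blast+
  define E where "E = mat 1 - C ** Cp"
  have hE: "cadj E = E" unfolding E_def cadj_diff c3 by simp
  have EC: "E ** C = 0" unfolding E_def matrix_diff_rdistrib c1 by simp
  have CE: "C ** E = 0"
  proof -
    have "cadj (E ** C) = cadj C ** cadj E" by (rule cadj_mult)
    then have "C ** E = cadj (E ** C)" unfolding h hE by simp
    then show ?thesis using EC by simp
  qed
  have "cadj B ** E = 0" by (rule mult_zero_ker[OF CE k])
  then have "cadj (cadj B ** E) = 0" by simp
  then have "E ** B = 0" unfolding cadj_mult hE by simp
  then have "B - C ** Cp ** B = 0" unfolding E_def matrix_diff_rdistrib by simp
  then show ?thesis unfolding Cp_def by simp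
qed

lemma trace_herm_real:
  assumes "cadj A = A" "cadj B = B"
  shows "Im (trace (A ** (B::complex^'n^'n))) = 0"
proof -
  have "trace (A ** B) = cnj (trace (cadj (A ** B)))" by (simp add: trace_cadj)
  also have "\<dots> = cnj (trace (B ** A))" unfolding cadj_mult assms ..
  also have "\<dots> = cnj (trace (A ** B))" by (rule arg_cong[where f=cnj], rule trace_mul_sym)
  finally have "trace (A ** B) = cnj (trace (A ** B))" .
  then have "Im (trace (A ** B)) = Im (cnj (trace (A ** B)))" by simp
  then show ?thesis by simp
qed

lemma trace_sandwich_real:
  assumes "cadj C = C"
  shows "Im (trace (cadj Z ** C ** (Z::complex^'n^'n))) = 0"
proof -
  have "trace (cadj Z ** C ** Z) = cnj (trace (cadj (cadj Z ** C ** Z)))" by (simp add: trace_cadj)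
  also have "\<dots> = cnj (trace (cadj Z ** C ** Z))" unfolding cadj_mult3 assms cadj_cadj ..
  finally have "trace (cadj Z ** C ** Z) = cnj (trace (cadj Z ** C ** Z))" .
  then have "Im (trace (cadj Z ** C ** Z)) = Im (cnj (trace (cadj Z ** C ** Z)))" by simp
  then show ?thesis by simp
qed

lemma trace_sandwich_nonneg:
  assumes "psd C"
  shows "0 \<le> trace (cadj Z ** C ** (Z::complex^'n^'n))"
proof -
  have "trace (cadj Z ** C ** Z) = trace (Z ** (cadj Z ** C))" by (rule trace_mul_sym)
  also have "\<dots> = trace ((Z ** cadj Z) ** C)" by (simp only: matrix_mul_assoc)
  also have "\<dots> = trace (C ** (Z ** cadj Z))" by (rule trace_mul_sym)
  finally have e: "trace (cadj Z ** C ** Z) = trace (C ** (Z ** cadj Z))" .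
  have "psd (Z ** cadj Z)" using psd_adj_mult[of "cadj Z"] by simp
  then show ?thesis unfolding e using trace_psd_mult assms by blast
qed



lemma mv_uminus: "(- (A::complex^'n^'m)) *v x = - (A *v x)"
  by (simp add: matrix_vector_mult_def vec_eq_iff sum_negf)

lemma ip_uminus_right: "ip x (- y) = - ip x y"
  by (simp add: ip_def sum_negf)

lemma psd_N:
  fixes X K :: "complex^'m^'m"
  assumes X: "psd X" and kk: "ker X \<subseteq> ker (cadj K)"
  shows "psd (block2 (cadj K ** mp_inv X ** K) (- cadj K) (- K) X)"
proof -
  have hX: "cadj X = X" using X by (rule psd_herm)
  define Xp where "Xp = mp_inv X"
  have hXp: "cadj Xp = Xp" unfolding Xp_def by (rule herm_mp(2)[OF hX])
  have rc: "X ** Xp ** K = K" unfolding Xp_def by (rule range_cond[OF hX kk])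
  define Z where "Z = cadj K ** Xp ** K"
  have hZ: "cadj Z = Z" unfolding Z_def cadj_mult3 hXp cadj_cadj ..
  have hN: "cadj (block2 Z (- cadj K) (- K) X) = block2 Z (- cadj K) (- K) X"
    unfolding cadj_block2 cadj_uminus hZ hX cadj_cadj ..
  have q: "0 \<le> ip w (block2 Z (- cadj K) (- K) X *v w)" for w
  proof -
    define u where "u = vl w"
    define v where "v = vr w"
    define r where "r = Xp *v (K *v u)"
    have Ku: "K *v u = X *v r"
    proof -
      have "K *v u = (X ** Xp ** K) *v u" using rc by simp
      also have "\<dots> = X *v r" unfolding r_def by (simp only: matrix_vector_mul_assoc matrix_mul_assoc)
      finally show ?thesis .
    qed
    have ipXs: "ip (X *v a) b = ip a (X *v b)" for a b
      using ip_adj[of a X b] hX by simp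
    have e1: "ip u (Z *v u) = ip r (X *v r)"
    proof -
      have "ip u (Z *v u) = ip u (cadj K *v (Xp *v (K *v u)))"
        unfolding Z_def by (simp only: matrix_vector_mul_assoc matrix_mul_assoc)
      also have "\<dots> = ip (K *v u) (Xp *v (K *v u))" using ip_adj[of u "cadj K"] by simp
      also have "\<dots> = ip r (X *v r)" unfolding Ku[symmetric] r_def[symmetric] using Ku ipXs by simp
      finally show ?thesis .
    qed
    have e2: "ip u ((- cadj K) *v v) = - ip r (X *v v)"
    proof -
      have "ip u ((- cadj K) *v v) = - ip u (cadj K *v v)" by (simp only: mv_uminus ip_uminus_right)
      also have "\<dots> = - ip (K *v u) v" using ip_adj[of u "cadj K"] by simp
      also have "\<dots> = - ip r (X *v v)" unfolding Ku ipXs ..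
      finally show ?thesis .
    qed
    have e3: "ip v ((- K) *v u) = - ip v (X *v r)"
      by (simp only: mv_uminus ip_uminus_right Ku)
    have "ip w (block2 Z (- cadj K) (- K) X *v w) = ip r (X *v r) - ip r (X *v v) - ip v (X *v r) + ip v (X *v v)"
      unfolding block2_qf u_def[symmetric] v_def[symmetric] e1 e2 e3 by simp
    also have "\<dots> = ip (r - v) (X *v (r - v))"
      by (simp only: mv_diff ip_diff_left ip_diff_right) simp
    finally show ?thesis using psd_qf[OF X] by simp
  qed
  show ?thesis unfolding psd_ip Z_def[symmetric] Xp_def[symmetric] using hN q by blast
qed

lemma fwd:
  fixes \<phi> :: "complex^'n^'n \<Rightarrow> complex^'m^'m"
    and \<psi> :: "complex^'m^'m \<Rightarrow> complex^'n^'n"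
  assumes p: "positive_map \<phi>" and a: "is_hs_adjoint \<phi> \<psi>" and gs: "gen_schwarz \<phi>"
    and X: "psd X" and kk: "ker X \<subseteq> ker (cadj K)"
  shows "trace (\<psi> (cadj K ** mp_inv X ** K)) \<ge> trace (cadj (\<psi> K) ** mp_inv (\<psi> X) ** \<psi> K)"
proof -
  have adj: "hs_inner (\<psi> Y') W = hs_inner Y' (\<phi> W)" for Y' W using a by (simp add: is_hs_adjoint_def)
  have hX: "cadj X = X" using X by (rule psd_herm)
  define Xp where "Xp = mp_inv X"
  have hXp: "cadj Xp = Xp" unfolding Xp_def by (rule herm_mp(2)[OF hX])
  define C where "C = \<psi> X"
  have hC: "cadj C = C" unfolding C_def by (rule psi_herm[OF p a hX])
  define Cp where "Cp = mp_inv C"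
  have pC: "pen C Cp" unfolding Cp_def by (rule herm_mp(1)[OF hC])
  have hCp: "cadj Cp = Cp" unfolding Cp_def by (rule herm_mp(2)[OF hC])
  have CpCCp: "Cp ** C ** Cp = Cp" using pC unfolding pen_def by blast
  define B where "B = \<psi> K"
  define Y where "Y = Cp ** B"
  define A where "A = \<phi> (mat 1)"
  have hA: "cadj A = A" unfolding A_def by (rule pos_herm[OF p]) simp
  define Z where "Z = cadj K ** Xp ** K"
  have hZ: "cadj Z = Z" unfolding Z_def cadj_mult3 hXp cadj_cadj ..
  define T where "T = trace (cadj B ** Cp ** B)"
  have L: "trace (\<psi> Z) = cnj (trace (Z ** A))"
    using trace_psi[OF a, of Z] unfolding hZ A_def .
  have imL: "Im (trace (Z ** A)) = 0" by (rule trace_herm_real[OF hZ hA])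
  have imT: "Im T = 0" unfolding T_def by (rule trace_sandwich_real[OF hCp])
  have cY: "cadj Y = cadj B ** Cp" unfolding Y_def cadj_mult hCp ..
  have T1: "T = trace (cadj Y ** B)" unfolding T_def cY ..
  have T2: "T = trace (cadj Y ** C ** Y)"
  proof -
    have "cadj Y ** C ** Y = cadj B ** (Cp ** C ** Cp) ** B"
      unfolding cY unfolding Y_def by (simp only: matrix_mul_assoc)
    then show ?thesis unfolding CpCCp T_def by simp
  qed
  define s where "s = trace (cadj K ** \<phi> Y)"
  define G where "G = \<phi> Y"
  define D where "D = \<phi> (Y ** cadj Y)"
  have T1': "trace (cadj Y ** B) = cnj s"
  proof -
    have "trace (cadj Y ** B) = hs_inner Y (\<psi> K)" unfolding hs_inner_def B_def ..
    also have "\<dots> = cnj (hs_inner (\<psi> K) Y)" by (rule hs_inner_conj)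
    also have "\<dots> = cnj (hs_inner K (\<phi> Y))" unfolding adj ..
    finally show ?thesis unfolding s_def hs_inner_def .
  qed
  have T2': "trace (cadj Y ** C ** Y) = trace (X ** D)"
  proof -
    have "trace (cadj Y ** C ** Y) = trace (Y ** (cadj Y ** C))" by (rule trace_mul_sym)
    also have "\<dots> = trace ((Y ** cadj Y) ** C)" by (simp only: matrix_mul_assoc)
    also have "\<dots> = trace (C ** (Y ** cadj Y))" by (rule trace_mul_sym)
    also have "\<dots> = hs_inner (\<psi> X) (Y ** cadj Y)" unfolding hs_inner_def C_def[symmetric] hC ..
    also have "\<dots> = hs_inner X D" unfolding adj D_def ..
    finally show ?thesis unfolding hs_inner_def hX .
  qed
  have M: "psd (block2 A (cadj G) G D)"
  proof -
    have "psd (block2 (\<phi> (mat 1)) (\<phi> (cadj Y)) (cadj (\<phi> (cadj Y))) (\<phi> (cadj (cadj Y) ** cadj Y)))"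
      using gs unfolding gen_schwarz_def by blast
    then show ?thesis unfolding pos_adj[OF p] cadj_cadj A_def G_def D_def .
  qed
  have N: "psd (block2 Z (- cadj K) (- K) X)"
    using psd_N[OF X kk] unfolding Z_def Xp_def .
  have "0 \<le> trace (block2 A (cadj G) G D ** block2 Z (- cadj K) (- K) X)"
    by (rule trace_psd_mult[OF M N])
  then have tr0: "0 \<le> Re (trace (block2 A (cadj G) G D ** block2 Z (- cadj K) (- K) X))"
    by (simp add: less_eq_complex_def)
  have t1: "trace (A ** Z) = trace (Z ** A)" by (rule trace_mul_sym)
  have t2: "trace (cadj G ** - K) = - cnj s"
  proof -
    have "trace (cadj G ** K) = hs_inner G K" unfolding hs_inner_def ..
    also have "\<dots> = cnj (hs_inner K G)" by (rule hs_inner_conj)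
    finally show ?thesis unfolding matrix_mult_uminus_right trace_uminus s_def G_def hs_inner_def by simp
  qed
  have t3: "trace (G ** - cadj K) = - s"
  proof -
    have "trace (G ** cadj K) = trace (cadj K ** G)" by (rule trace_mul_sym)
    then show ?thesis unfolding matrix_mult_uminus_right trace_uminus s_def G_def by simp
  qed
  have t4: "trace (D ** X) = trace (X ** D)" by (rule trace_mul_sym)
  have ineq: "0 \<le> Re (trace (Z ** A)) - 2 * Re s + Re (trace (X ** D))"
    using tr0 unfolding trace_block2_mult t1 t2 t3 t4 by simp
  have r1: "Re T = Re s" using T1 T1' by simp
  have r2: "Re T = Re (trace (X ** D))" using T2 T2' by simp
  have reT: "Re T = 2 * Re s - Re (trace (X ** D))" using r1 r2 by linarith
  have "Re T \<le> Re (trace (\<psi> Z))" unfolding L reT using ineq by simp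
  moreover have "Im T = Im (trace (\<psi> Z))" unfolding L using imT imL by simp
  ultimately have "T \<le> trace (\<psi> Z)" by (simp add: less_eq_complex_def)
  then show ?thesis unfolding T_def Z_def Xp_def B_def Cp_def C_def .
qed



lemma mat_eq_mv: "(\<And>x. A *v x = B *v x) \<Longrightarrow> (A::complex^'n^'m) = B"
  by (rule matrix_eq_columns) (metis mult_axis)

lemma outer_add_left: "outer (a + b) c = outer a c + outer b c"
  by (simp add: outer_def vec_eq_iff distrib_right)
lemma outer_add_right: "outer a (b + c) = outer a b + outer a c"
  by (simp add: outer_def vec_eq_iff distrib_left)
lemma outer_scale_left: "outer (t *s a) b = cscale t (outer a b)"
  by (simp add: outer_def cscale_def vec_eq_iff mult.assoc)
lemma outer_scale_right: "outer a (t *s b) = cscale (cnj t) (outer a b)"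
  by (simp add: outer_def cscale_def vec_eq_iff mult_ac)

lemma mv_add_matrix: "((A::complex^'n^'m) + B) *v x = A *v x + B *v x"
  by (rule matrix_vector_mult_add_rdistrib)

lemma ip_cadj_qf: "ip w (cadj M *v w) = cnj (ip w (M *v w))"
  using ip_adj[of w "cadj M" w] by (simp add: ip_conj[of "M *v w" w])

lemma psd_add: "psd A \<Longrightarrow> psd B \<Longrightarrow> psd (A + B)"
  by (simp add: psd_ip cadj_add mv_add_matrix ip_add_right add_nonneg_nonneg)

lemma qf_zero_matrix:
  fixes M :: "complex^'n^'n"
  assumes "\<And>w. ip w (M *v w) = 0"
  shows "M = 0"
proof -
  have e: "ip (axis i 1) (M *v axis j 1) = M $ i $ j" for i j by (simp add: ip_axis_left mv_axis_comp)
  have "M $ i $ j = 0" for i j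
  proof -
    have 1: "ip (axis i 1 + axis j 1) (M *v (axis i 1 + axis j 1)) = 0" by (rule assms)
    have 2: "ip (axis i 1 + \<i> *s axis j 1) (M *v (axis i 1 + \<i> *s axis j 1)) = 0" by (rule assms)
    have ii: "M $ i $ i = 0" "M $ j $ j = 0" using assms[of "axis i 1"] assms[of "axis j 1"] e by auto
    from 1 have a: "M $ i $ j + M $ j $ i = 0"
      unfolding mv_add ip_add_left ip_add_right e using ii by (simp add: ac_simps)
    from 2 have b: "\<i> * M $ i $ j - \<i> * M $ j $ i = 0"
      unfolding mv_add mv_scale ip_add_left ip_add_right ip_scale_left ip_scale_right e using ii
      by (simp add: algebra_simps)
    from a b show ?thesis by (simp add: algebra_simps)
  qed
  then show ?thesis by (simp add: vec_eq_iff)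
qed

lemma psd_trace_zero:
  fixes Q :: "complex^'n^'n"
  assumes q: "psd Q" and t: "trace Q = 0"
  shows "Q = 0"
proof -
  have d: "0 \<le> Q $ k $ k" for k
    using psd_qf[OF q, of "axis k 1"] by (simp add: ip_axis_left mv_axis_comp)
  have "0 = Re (trace Q)" using t by simp
  also have "\<dots> = (\<Sum>k\<in>UNIV. Re (Q $ k $ k))" by (simp add: trace_def Re_sum)
  finally have "(\<Sum>k\<in>UNIV. Re (Q $ k $ k)) = 0" by simp
  moreover have "\<forall>k\<in>UNIV. 0 \<le> Re (Q $ k $ k)" using d by (simp add: less_eq_complex_def)
  ultimately have "\<forall>k\<in>UNIV. Re (Q $ k $ k) = 0" by (simp add: sum_nonneg_eq_0_iff)
  then have "Q $ k $ k = 0" for k using d[of k] by (simp add: less_eq_complex_def complex_eq_iff)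
  then have "Q $ k $ j = 0" for k j using psd_diag_zero[OF q] by blast
  then show ?thesis by (simp add: vec_eq_iff)
qed

lemma pos_outer_zero:
  assumes p: "positive_map \<phi>" and z: "\<phi> (outer x x) = 0"
  shows "\<phi> (outer x y) = 0"
proof (rule qf_zero_matrix)
  fix w
  have l: "clinear_map \<phi>" using p by (simp add: positive_map_def)
  define \<alpha> where "\<alpha> = ip w (\<phi> (outer x y) *v w)"
  define \<gamma> where "\<gamma> = ip w (\<phi> (outer y y) *v w)"
  have g0: "0 \<le> \<gamma>" unfolding \<gamma>_def
    using p psd_outer[of y] psd_qf unfolding positive_map_def by blast
  have yx: "ip w (\<phi> (outer y x) *v w) = cnj \<alpha>"
  proof -
    have "\<phi> (outer y x) = cadj (\<phi> (outer x y))" using pos_adj[OF p, of "outer x y"] by (simp add: cadj_outer)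
    then show ?thesis unfolding \<alpha>_def by (simp add: ip_cadj_qf)
  qed
  have key: "0 \<le> Re (cnj t * \<alpha> + t * cnj \<alpha> + t * cnj t * \<gamma>)" for t
  proof -
    have "psd (\<phi> (outer (x + t *s y) (x + t *s y)))" using p psd_outer unfolding positive_map_def by blast
    then have "0 \<le> ip w (\<phi> (outer (x + t *s y) (x + t *s y)) *v w)" by (rule psd_qf)
    moreover have "outer (x + t *s y) (x + t *s y) = outer x x + cscale (cnj t) (outer x y)
        + (cscale t (outer y x) + cscale (t * cnj t) (outer y y))"
      by (simp add: outer_add_left outer_add_right outer_scale_left outer_scale_right cscale_cscale cscale_add add.assoc mult.commute)
    ultimately have "0 \<le> ip w ((\<phi> (outer x x) + cscale (cnj t) (\<phi> (outer x y))
        + (cscale t (\<phi> (outer y x)) + cscale (t * cnj t) (\<phi> (outer y y)))) *v w)"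
      by (simp add: lin_add[OF l] lin_scale[OF l])
    then have "0 \<le> cnj t * \<alpha> + t * cnj \<alpha> + t * cnj t * \<gamma>"
      unfolding z mv_add_matrix mv_cscale ip_add_right ip_scale_right yx \<alpha>_def[symmetric] \<gamma>_def[symmetric]
      by (simp add: add.assoc)
    then show ?thesis by (simp add: less_eq_complex_def)
  qed
  define g where "g = Re \<gamma>"
  have gg: "g \<ge> 0" using g0 by (simp add: g_def less_eq_complex_def)
  have gi: "Im \<gamma> = 0" using g0 by (simp add: less_eq_complex_def)
  define r where "r = 1 / (g + 1)"
  have r0: "r > 0" using gg by (simp add: r_def)
  have rg: "r * g < 1" using gg by (simp add: r_def field_simps)
  define t where "t = - (of_real r * \<alpha>)"
  have "Re (cnj t * \<alpha> + t * cnj \<alpha> + t * cnj t * \<gamma>) = r * (cmod \<alpha>)\<^sup>2 * (r * g - 2)"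
  proof -
    have "cnj t * \<alpha> + t * cnj \<alpha> + t * cnj t * \<gamma> = of_real r * (\<alpha> * cnj \<alpha>) * (of_real r * \<gamma> - 2)"
      unfolding t_def by (simp add: algebra_simps)
    also have "\<dots> = of_real r * of_real ((cmod \<alpha>)\<^sup>2) * (of_real r * \<gamma> - 2)"
      by (simp only: complex_norm_square)
    finally show ?thesis using gi by (simp add: g_def)
  qed
  then have "0 \<le> r * (cmod \<alpha>)\<^sup>2 * (r * g - 2)" using key[of t] by simp
  moreover have "r * g - 2 < 0" using rg by simp
  ultimately have "r * (cmod \<alpha>)\<^sup>2 \<le> 0" by (meson not_le mult_pos_neg order.strict_trans2)
  then have "(cmod \<alpha>)\<^sup>2 \<le> 0" using r0 by (meson not_le mult_pos_pos)
  then show "ip w (\<phi> (outer x y) *v w) = 0" unfolding \<alpha>_def[symmetric] by simp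
qed

lemma complete_sq:
  fixes C Cp B W :: "complex^'n^'n"
  assumes C: "psd C" and pC: "pen C Cp" and hCp: "cadj Cp = Cp" and rc: "C ** Cp ** B = B"
  shows "2 * Re (trace (cadj W ** B)) - Re (trace (cadj W ** C ** W)) \<le> Re (trace (cadj B ** Cp ** B))"
proof -
  have hC: "cadj C = C" using C by (rule psd_herm)
  have CpCCp: "Cp ** C ** Cp = Cp" using pC unfolding pen_def by blast
  define E where "E = W - Cp ** B"
  have cE: "cadj E = cadj W - cadj B ** Cp" unfolding E_def cadj_diff cadj_mult hCp ..
  have t1: "cadj W ** C ** (Cp ** B) = cadj W ** B"
  proof -
    have "cadj W ** C ** (Cp ** B) = cadj W ** (C ** Cp ** B)" by (simp only: matrix_mul_assoc)
    then show ?thesis unfolding rc .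
  qed
  have t2: "cadj B ** Cp ** C ** (Cp ** B) = cadj B ** Cp ** B"
  proof -
    have "cadj B ** Cp ** C ** (Cp ** B) = cadj B ** (Cp ** C ** Cp) ** B" by (simp only: matrix_mul_assoc)
    then show ?thesis unfolding CpCCp .
  qed
  have t3: "cadj B ** Cp ** C ** W = cadj (cadj W ** B)"
  proof -
    have "cadj (cadj W ** C ** (Cp ** B)) = cadj B ** Cp ** C ** W"
      unfolding cadj_mult hCp hC cadj_cadj by (simp only: matrix_mul_assoc)
    then show ?thesis unfolding t1 by simp
  qed
  have "cadj E ** C ** E = cadj W ** C ** W - cadj B ** Cp ** C ** W - (cadj W ** C ** (Cp ** B) - cadj B ** Cp ** C ** (Cp ** B))"
    unfolding cE unfolding E_def by (simp only: matrix_diff_ldistrib matrix_diff_rdistrib)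
  also have "\<dots> = cadj W ** C ** W - cadj (cadj W ** B) - (cadj W ** B - cadj B ** Cp ** B)"
    unfolding t1 t2 t3 ..
  finally have e: "trace (cadj E ** C ** E) = trace (cadj W ** C ** W) - cnj (trace (cadj W ** B)) - (trace (cadj W ** B) - trace (cadj B ** Cp ** B))"
    by (simp add: trace_sub trace_cadj)
  have "0 \<le> Re (trace (cadj E ** C ** E))" using trace_sandwich_nonneg[OF C, of E] by (simp add: less_eq_complex_def)
  then show ?thesis unfolding e by simp
qed

lemma lim_arg:
  fixes N \<alpha> \<beta> \<delta> :: real
  assumes N: "N > 0" and h: "\<And>\<epsilon>. \<epsilon> > 0 \<Longrightarrow> 0 \<le> N / (N + \<epsilon>) * \<alpha> + \<beta> + \<epsilon> * \<delta>"
  shows "0 \<le> \<alpha> + \<beta>"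
proof -
  let ?f = "\<lambda>\<epsilon>. N / (N + \<epsilon>) * \<alpha> + \<beta> + \<epsilon> * \<delta>"
  have "(?f \<longlongrightarrow> ?f 0) (at_right 0)"
    using N by (intro tendsto_intros) auto
  moreover have "eventually (\<lambda>\<epsilon>. 0 \<le> ?f \<epsilon>) (at_right 0)"
    using eventually_at_right_less[of "0::real"] h by (auto elim!: eventually_mono)
  ultimately have "0 \<le> ?f 0"
    by (intro tendsto_lowerbound) auto
  then show ?thesis using N by simp
qed



lemma mat_mult_left: "mat c ** (Q::complex^'n^'n) = cscale c Q"
  by (rule mat_eq_mv) (simp add: matrix_vector_mul_assoc[symmetric] mat_mv mv_cscale)

lemma sandwich_outer: "outer a b ** M ** outer c d = cscale (ip b (M *v c)) (outer a d)"
proof (rule mat_eq_mv)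
  fix x
  have "(outer a b ** M ** outer c d) *v x = outer a b *v (M *v (outer c d *v x))"
    by (simp only: matrix_vector_mul_assoc matrix_mul_assoc)
  also have "\<dots> = (ip d x * ip b (M *v c)) *s a"
    by (simp add: outer_mult_vec mv_scale ip_scale_right mult.commute)
  also have "\<dots> = cscale (ip b (M *v c)) (outer a d) *v x"
    by (simp add: mv_cscale outer_mult_vec mult.commute)
  finally show "(outer a b ** M ** outer c d) *v x = cscale (ip b (M *v c)) (outer a d) *v x" .
qed

lemma trace_outer_left: "trace (outer v v ** Q) = ip v (Q *v v)"
  by (simp add: trace_mul_sym[of "outer v v"] trace_mult_outer)

lemma hs_inner_zero_right: "hs_inner A 0 = 0"
  by (simp add: hs_inner_def trace_def)

lemma bwd_eps:
  fixes \<phi> :: "complex^'n^'n \<Rightarrow> complex^'m^'m"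
    and \<psi> :: "complex^'m^'m \<Rightarrow> complex^'n^'n"
  assumes p: "positive_map \<phi>" and a: "is_hs_adjoint \<phi> \<psi>"
    and R: "\<forall>(K::complex^'m^'m) (X::complex^'m^'m). psd X \<and> ker X \<subseteq> ker (cadj K) \<longrightarrow>
       trace (\<psi> (cadj K ** mp_inv X ** K)) \<ge> trace (cadj (\<psi> K) ** mp_inv (\<psi> X) ** \<psi> K)"
    and v: "v \<noteq> 0" and \<epsilon>: "\<epsilon> > 0"
  shows "0 \<le> Re (ip v v) / (Re (ip v v) + \<epsilon>) * Re (ip u (\<phi> (mat 1) *v u)) + 2 * Re (ip u (\<phi> K *v v))
     + Re (ip v (\<phi> (cadj K ** K) *v v)) + \<epsilon> * Re (trace (\<phi> (cadj K ** K)))"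
proof -
  have adj: "hs_inner (\<psi> Y') W = hs_inner Y' (\<phi> W)" for Y' W using a by (simp add: is_hs_adjoint_def)
  define N where "N = Re (ip v v)"
  have ipvv: "ip v v = of_real N"
    using ip_self_ge0[of v] by (simp add: N_def less_eq_complex_def complex_eq_iff)
  have Npos: "N > 0"
  proof -
    have "N \<ge> 0" using ip_self_ge0[of v] by (simp add: N_def less_eq_complex_def)
    moreover have "N \<noteq> 0" using v ipvv ip_self_eq0[of v] by auto
    ultimately show ?thesis by simp
  qed
  define e where "e = complex_of_real \<epsilon>"
  define n where "n = complex_of_real N"
  have e0: "e \<noteq> 0" using \<epsilon> by (simp add: e_def)
  have en0: "e + n \<noteq> 0"
  proof -
    have "Re (e + n) > 0" using \<epsilon> Npos by (simp add: e_def n_def)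
    then show ?thesis by (metis zero_complex.sel(1) less_irrefl plus_complex.sel(1))
  qed
  define k where "k = 1 / (e + n)"
  define P where "P = outer v v"
  define Xe where "Xe = P + mat e"
  define Xi where "Xi = cscale (1 / e) (mat 1 - cscale k P)"
  have Xe_mv: "Xe *v x = ip v x *s v + e *s x" for x
    by (simp add: Xe_def P_def mv_add_matrix outer_mult_vec mat_mv)
  have Xi_mv: "Xi *v x = (1 / e) *s (x - (k * ip v x) *s v)" for x
    by (simp add: Xi_def P_def mv_cscale matrix_diff_mv mv_cscale outer_mult_vec vector_smult_assoc)
  have ipXi: "ip v (Xi *v x) = k * ip v x" for x
  proof -
    have "ip v (Xi *v x) = (1 / e) * (ip v x - k * ip v x * n)"
      unfolding Xi_mv by (simp add: ip_scale_right ip_diff_right ipvv n_def diff_divide_distrib)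
    also have "\<dots> = k * ip v x" unfolding k_def using e0 en0 by (simp add: field_simps)
    finally show ?thesis .
  qed
  have XeXi: "Xe ** Xi = mat 1"
  proof (rule mat_eq_mv)
    fix x
    have "(Xe ** Xi) *v x = (k * ip v x) *s v + e *s ((1 / e) *s (x - (k * ip v x) *s v))"
      by (simp only: matrix_vector_mul_assoc[symmetric] Xe_mv ipXi) (simp add: Xi_mv)
    also have "\<dots> = x" using e0 by (simp add: vector_smult_assoc)
    finally show "(Xe ** Xi) *v x = mat 1 *v x" by simp
  qed
  have XiXe: "Xi ** Xe = mat 1"
  proof (rule mat_eq_mv)
    fix x
    have ipXe: "ip v (Xe *v x) = (n + e) * ip v x"
      unfolding Xe_mv by (simp add: ip_add_right ip_scale_right ipvv n_def algebra_simps)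
    have kk: "k * ((n + e) * ip v x) = ip v x" unfolding k_def using en0 by (simp add: field_simps)
    have "(Xi ** Xe) *v x = (1 / e) *s ((ip v x *s v + e *s x) - ip v x *s v)"
      by (simp only: matrix_vector_mul_assoc[symmetric] Xi_mv ipXe kk) (simp add: Xe_mv)
    also have "\<dots> = x" using e0 by (simp add: vector_smult_assoc)
    finally show "(Xi ** Xe) *v x = mat 1 *v x" by simp
  qed
  have pen: "pen Xe Xi" unfolding pen_def XeXi XiXe by simp
  have mpXe: "mp_inv Xe = Xi" by (rule mp_inv_eqI[OF pen])
  have hXe: "cadj Xe = Xe" by (simp add: Xe_def P_def cadj_add cadj_outer e_def)
  have pm: "psd (mat (complex_of_real \<epsilon>))" using \<epsilon> by (intro psd_mat) simp
  have psdXe: "psd Xe" unfolding Xe_def P_def e_def by (rule psd_add[OF psd_outer pm])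
  define K' where "K' = outer v u"
  have kerXe: "ker Xe \<subseteq> ker (cadj K')"
  proof
    fix x assume "x \<in> ker Xe"
    then have "Xe *v x = 0" by (simp add: ker_def)
    moreover have "Xi *v (Xe *v x) = x" using XiXe by (simp add: matrix_vector_mul_assoc)
    ultimately have "x = 0" by simp
    then show "x \<in> ker (cadj K')" by (simp add: ker_def)
  qed
  have Rin: "trace (\<psi> (cadj K' ** mp_inv Xe ** K')) \<ge> trace (cadj (\<psi> K') ** mp_inv (\<psi> Xe) ** \<psi> K')"
    using R psdXe kerXe by blast
  define A where "A = \<phi> (mat 1)"
  define F where "F = \<phi> K"
  define D where "D = \<phi> (cadj K ** K)"
  define \<alpha> where "\<alpha> = ip u (A *v u)"
  define \<beta> where "\<beta> = ip u (F *v v)"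
  define \<gamma> where "\<gamma> = ip v (D *v v)"
  define s where "s = k * n"
  have s_real: "s = of_real (N / (N + \<epsilon>))" unfolding s_def k_def n_def e_def by (simp add: field_simps)
  have LHS: "trace (\<psi> (cadj K' ** mp_inv Xe ** K')) = s * cnj \<alpha>"
  proof -
    have "cadj K' ** mp_inv Xe ** K' = cscale s (outer u u)"
      unfolding K'_def cadj_outer mpXe sandwich_outer ipXi ipvv s_def n_def ..
    then have "trace (\<psi> (cadj K' ** mp_inv Xe ** K')) = cnj (trace (cscale (cnj s) (outer u u) ** A))"
      unfolding trace_psi[OF a] A_def by (simp add: cadj_cscale cadj_outer)
    also have "\<dots> = s * cnj (trace (A ** outer u u))"
      by (simp add: cscale_mult_left trace_cscale trace_mul_sym[of "outer u u"])
    finally show ?thesis by (simp add: trace_mult_outer \<alpha>_def)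
  qed
  define B where "B = \<psi> K'"
  define C where "C = \<psi> Xe"
  define Cp where "Cp = mp_inv C"
  have psdC: "psd C" unfolding C_def by (rule psi_pos[OF p a psdXe])
  have hC: "cadj C = C" using psdC by (rule psd_herm)
  have kerC: "ker C \<subseteq> ker (cadj B)"
  proof
    fix x assume "x \<in> ker C"
    then have Cx: "C *v x = 0" by (simp add: ker_def)
    define Q where "Q = \<phi> (outer x x)"
    have psdQ: "psd Q" using p psd_outer unfolding Q_def positive_map_def by blast
    have "0 = ip x (C *v x)" using Cx by simp
    also have "\<dots> = cnj (hs_inner (\<psi> Xe) (outer x x))" unfolding C_def hs_inner_outer[symmetric] by (rule hs_inner_conj)
    also have "\<dots> = cnj (trace (Xe ** Q))" unfolding adj unfolding hs_inner_def hXe Q_def ..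
    also have "\<dots> = cnj (ip v (Q *v v) + e * trace Q)"
      unfolding Xe_def matrix_add_rdistrib' trace_add P_def trace_outer_left mat_mult_left trace_cscale ..
    finally have z0: "0 = cnj (ip v (Q *v v) + e * trace Q)" .
    then have z: "ip v (Q *v v) + e * trace Q = 0" by (metis complex_cnj_zero_iff)
    have q1: "0 \<le> Re (ip v (Q *v v))" using psd_qf[OF psdQ] by (simp add: less_eq_complex_def)
    have q2: "0 \<le> trace Q" using trace_psd_mult[OF psd_mat1 psdQ] by simp
    have s0: "Re (ip v (Q *v v)) + \<epsilon> * Re (trace Q) = 0"
      using arg_cong[where f=Re, OF z] by (simp add: e_def)
    have "0 \<le> Re (trace Q)" using q2 by (simp add: less_eq_complex_def)
    then have "0 \<le> \<epsilon> * Re (trace Q)" using \<epsilon> by simp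
    then have "\<epsilon> * Re (trace Q) = 0" using s0 q1 by linarith
    then have "Re (trace Q) = 0" using \<epsilon> by simp
    then have "trace Q = 0" using q2 by (simp add: less_eq_complex_def complex_eq_iff)
    then have "Q = 0" by (rule psd_trace_zero[OF psdQ])
    then have oz: "\<phi> (outer x z) = 0" for z using pos_outer_zero[OF p] unfolding Q_def by blast
    define y where "y = cadj B *v x"
    have "ip x (B *v y) = cnj (hs_inner (\<psi> K') (outer x y))" unfolding B_def hs_inner_outer[symmetric] by (rule hs_inner_conj)
    also have "\<dots> = 0" unfolding adj oz hs_inner_zero_right by simp
    finally have "ip x (B *v y) = 0" .
    then have "ip y y = 0" using ip_adj[of y "cadj B" x] ip_conj[of "B *v y" x] unfolding y_def by simp
    then show "x \<in> ker (cadj B)" by (simp add: ip_self_eq0 y_def ker_def)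
  qed
  have rc: "C ** Cp ** B = B" unfolding Cp_def by (rule range_cond[OF hC kerC])
  have pC: "pen C Cp" unfolding Cp_def by (rule herm_mp(1)[OF hC])
  have hCp: "cadj Cp = Cp" unfolding Cp_def by (rule herm_mp(2)[OF hC])
  have cs: "2 * Re (trace (cadj (- cadj K) ** B)) - Re (trace (cadj (- cadj K) ** C ** (- cadj K))) \<le> Re (trace (cadj B ** Cp ** B))"
    by (rule complete_sq[OF psdC pC hCp rc])
  have tb: "trace (cadj (- cadj K) ** B) = - \<beta>"
  proof -
    have "trace (K ** B) = hs_inner (cadj K) (\<psi> K')" unfolding hs_inner_def cadj_cadj B_def ..
    also have "\<dots> = cnj (hs_inner K' (\<phi> (cadj K)))" unfolding adj[symmetric] by (rule hs_inner_conj)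
    also have "\<dots> = cnj (ip v (cadj F *v u))" unfolding pos_adj[OF p] K'_def hs_inner_outer F_def ..
    also have "\<dots> = \<beta>" using ip_adj[of v "cadj F" u] ip_conj[of "F *v v" u] unfolding \<beta>_def by simp
    finally show ?thesis unfolding cadj_uminus cadj_cadj matrix_mult_uminus_left trace_uminus by simp
  qed
  have tc: "trace (cadj (- cadj K) ** C ** (- cadj K)) = \<gamma> + e * trace D"
  proof -
    have "trace (cadj (- cadj K) ** C ** (- cadj K)) = trace (K ** C ** cadj K)"
      unfolding cadj_uminus cadj_cadj matrix_mult_uminus_left matrix_mult_uminus_right by simp
    also have "\<dots> = trace (cadj K ** (K ** C))" by (rule trace_mul_sym)
    also have "\<dots> = trace ((cadj K ** K) ** C)" by (simp only: matrix_mul_assoc)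
    also have "\<dots> = trace (C ** (cadj K ** K))" by (rule trace_mul_sym)
    also have "\<dots> = hs_inner (\<psi> Xe) (cadj K ** K)" unfolding hs_inner_def C_def[symmetric] hC ..
    also have "\<dots> = trace (Xe ** D)" unfolding adj unfolding hs_inner_def hXe D_def ..
    also have "\<dots> = \<gamma> + e * trace D"
      unfolding Xe_def matrix_add_rdistrib' trace_add P_def trace_outer_left mat_mult_left trace_cscale \<gamma>_def ..
    finally show ?thesis .
  qed
  have "Re (trace (cadj B ** Cp ** B)) \<le> Re (s * cnj \<alpha>)"
    using Rin unfolding LHS B_def[symmetric] C_def[symmetric] Cp_def[symmetric] by (simp add: less_eq_complex_def)
  then have "- 2 * Re \<beta> - Re \<gamma> - \<epsilon> * Re (trace D) \<le> N / (N + \<epsilon>) * Re \<alpha>"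
    using cs unfolding tb tc s_real by (simp add: e_def)
  then show ?thesis unfolding N_def[symmetric] A_def[symmetric] F_def[symmetric] D_def[symmetric]
      \<alpha>_def[symmetric] \<beta>_def[symmetric] \<gamma>_def[symmetric] by linarith
qed



lemma bwd_block:
  fixes \<phi> :: "complex^'n^'n \<Rightarrow> complex^'m^'m"
    and \<psi> :: "complex^'m^'m \<Rightarrow> complex^'n^'n"
  assumes p: "positive_map \<phi>" and a: "is_hs_adjoint \<phi> \<psi>"
    and R: "\<forall>(K::complex^'m^'m) (X::complex^'m^'m). psd X \<and> ker X \<subseteq> ker (cadj K) \<longrightarrow>
       trace (\<psi> (cadj K ** mp_inv X ** K)) \<ge> trace (cadj (\<psi> K) ** mp_inv (\<psi> X) ** \<psi> K)"
  shows "psd (block2 (\<phi> (mat 1)) (\<phi> K) (cadj (\<phi> K)) (\<phi> (cadj K ** K)))"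
proof -
  define A where "A = \<phi> (mat 1)"
  define F where "F = \<phi> K"
  define D where "D = \<phi> (cadj K ** K)"
  have psdA: "psd A" using p psd_mat1 unfolding A_def positive_map_def by blast
  have psdD: "psd D" using p psd_adj_mult unfolding D_def positive_map_def by blast
  have hA: "cadj A = A" using psdA by (rule psd_herm)
  have hD: "cadj D = D" using psdD by (rule psd_herm)
  have herm: "cadj (block2 A F (cadj F) D) = block2 A F (cadj F) D"
    unfolding cadj_block2 hA hD cadj_cadj ..
  have q: "0 \<le> ip w (block2 A F (cadj F) D *v w)" for w
  proof -
    define u where "u = vl w"
    define v where "v = vr w"
    define \<alpha> where "\<alpha> = ip u (A *v u)"
    define \<beta> where "\<beta> = ip u (F *v v)"
    define \<gamma> where "\<gamma> = ip v (D *v v)"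
    have cb: "ip v (cadj F *v u) = cnj \<beta>"
      using ip_adj[of v "cadj F" u] ip_conj[of "F *v v" u] unfolding \<beta>_def by simp
    have e: "ip w (block2 A F (cadj F) D *v w) = \<alpha> + \<beta> + cnj \<beta> + \<gamma>"
      unfolding block2_qf u_def[symmetric] v_def[symmetric] cb \<alpha>_def \<beta>_def \<gamma>_def ..
    have ia: "Im \<alpha> = 0" unfolding \<alpha>_def by (rule herm_qf_real[OF hA])
    have ic: "Im \<gamma> = 0" unfolding \<gamma>_def by (rule herm_qf_real[OF hD])
    have main: "0 \<le> Re \<alpha> + 2 * Re \<beta> + Re \<gamma>"
    proof (cases "v = 0")
      case True
      have "0 \<le> Re \<alpha>" using psd_qf[OF psdA, of u] unfolding \<alpha>_def by (simp add: less_eq_complex_def)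
      then show ?thesis using True by (simp add: \<beta>_def \<gamma>_def)
    next
      case False
      define N where "N = Re (ip v v)"
      have Npos: "N > 0"
      proof -
        have "N \<ge> 0" using ip_self_ge0[of v] by (simp add: N_def less_eq_complex_def)
        moreover have "ip v v \<noteq> 0" using False ip_self_eq0[of v] by simp
        moreover have "Im (ip v v) = 0" using ip_self_ge0[of v] by (simp add: less_eq_complex_def)
        ultimately show ?thesis by (simp add: N_def complex_eq_iff)
      qed
      have h: "0 \<le> N / (N + \<epsilon>) * Re \<alpha> + (2 * Re \<beta> + Re \<gamma>) + \<epsilon> * Re (trace D)" if "\<epsilon> > 0" for \<epsilon>
        using bwd_eps[OF p a R False that, of u K]
        unfolding N_def[symmetric] A_def[symmetric] F_def[symmetric] D_def[symmetric]
          \<alpha>_def[symmetric] \<beta>_def[symmetric] \<gamma>_def[symmetric] by linarith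
      have "0 \<le> Re \<alpha> + (2 * Re \<beta> + Re \<gamma>)" by (rule lim_arg[OF Npos h])
      then show ?thesis by linarith
    qed
    show ?thesis unfolding e using main ia ic by (simp add: less_eq_complex_def)
  qed
  show ?thesis unfolding A_def[symmetric] F_def[symmetric] D_def[symmetric] psd_ip
    using herm q by blast
qed

theorem theorem1p3:
  fixes \<phi> :: "complex^'n^'n \<Rightarrow> complex^'m^'m"
    and \<psi> :: "complex^'m^'m \<Rightarrow> complex^'n^'n"
  assumes "positive_map \<phi>"
    and "is_hs_adjoint \<phi> \<psi>"
  shows "gen_schwarz \<phi> \<longleftrightarrow>
    (\<forall>(K::complex^'m^'m) (X::complex^'m^'m). psd X \<and> ker X \<subseteq> ker (cadj K) \<longrightarrow>
       trace (\<psi> (cadj K ** mp_inv X ** K)) \<ge> trace (cadj (\<psi> K) ** mp_inv (\<psi> X) ** \<psi> K))"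
proof
  assume gs: "gen_schwarz \<phi>"
  show "\<forall>(K::complex^'m^'m) (X::complex^'m^'m). psd X \<and> ker X \<subseteq> ker (cadj K) \<longrightarrow>
       trace (\<psi> (cadj K ** mp_inv X ** K)) \<ge> trace (cadj (\<psi> K) ** mp_inv (\<psi> X) ** \<psi> K)"
    using fwd[OF assms(1) assms(2) gs] by blast
next
  assume R: "\<forall>(K::complex^'m^'m) (X::complex^'m^'m). psd X \<and> ker X \<subseteq> ker (cadj K) \<longrightarrow>
       trace (\<psi> (cadj K ** mp_inv X ** K)) \<ge> trace (cadj (\<psi> K) ** mp_inv (\<psi> X) ** \<psi> K)"
  have "clinear_map \<phi>" using assms(1) by (simp add: positive_map_def)
  then show "gen_schwarz \<phi>" unfolding gen_schwarz_def
    using bwd_block[OF assms(1) assms(2) R] by blast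
qed


end
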